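(* If $G$ and $H$ are finite simple graphs without isolated vertices that are both total Roman graphs, then $$\gamma_{tR}(G\times H)\le \frac{\gamma_{tR}(G)\gamma_{tR}(H)}{2}.$$
   Context: $\gamma_t(G)$ is the minimum size of a set $D\subseteq V(G)$ such that every vertex of $G$ has a neighbor in $D$. A total Roman dominating function on $G$ is a map $f:V(G)\to\{0,1,2\}$ such that every vertex with label 0 has a neighbor with label 2 and the subgraph induced by vertices with positive labels has no isolated vertices; $\gamma_{tR}(G)$ is the minimum of $\sum_v f(v)$ over such $f$. $G$ is a total Roman graph if $\gamma_{tR}(G)=2\gamma_t(G)$. The direct product $G\times H$ has vertex set $V(G)\times V(H)$, with $(g,h)(g',h')$ an edge iff $gg'\in E(G)$ and $hh'\in E(H)$. *)

theory Defs
  imports Complex_Main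
begin

definition simple_graph :: "'a set \<Rightarrow> 'a set set \<Rightarrow> bool" where
  "simple_graph V E \<longleftrightarrow> finite V \<and> (\<forall>e\<in>E. \<exists>u v. e = {u, v} \<and> u \<noteq> v \<and> u \<in> V \<and> v \<in> V)"

definition adj :: "'a set set \<Rightarrow> 'a \<Rightarrow> 'a \<Rightarrow> bool" where
  "adj E u v \<longleftrightarrow> {u, v} \<in> E \<and> u \<noteq> v"

definition no_isolated :: "'a set \<Rightarrow> 'a set set \<Rightarrow> bool" where
  "no_isolated V E \<longleftrightarrow> (\<forall>v\<in>V. \<exists>u\<in>V. adj E v u)"

definition total_dominating_set :: "'a set \<Rightarrow> 'a set set \<Rightarrow> 'a set \<Rightarrow> bool" where
  "total_dominating_set V E D \<longleftrightarrow> D \<subseteq> V \<and> (\<forall>v\<in>V. \<exists>u\<in>D. adj E v u)"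

definition gamma_t :: "'a set \<Rightarrow> 'a set set \<Rightarrow> nat" where
  "gamma_t V E = Min (card ` {D. total_dominating_set V E D})"

definition tRDF :: "'a set \<Rightarrow> 'a set set \<Rightarrow> ('a \<Rightarrow> nat) \<Rightarrow> bool" where
  "tRDF V E f \<longleftrightarrow>
     (\<forall>v\<in>V. f v \<le> 2) \<and> (\<forall>v. v \<notin> V \<longrightarrow> f v = 0) \<and>
     (\<forall>v\<in>V. f v = 0 \<longrightarrow> (\<exists>u\<in>V. adj E v u \<and> f u = 2)) \<and>
     (\<forall>v\<in>V. f v > 0 \<longrightarrow> (\<exists>u\<in>V. adj E v u \<and> f u > 0))"

definition weight :: "'a set \<Rightarrow> ('a \<Rightarrow> nat) \<Rightarrow> nat" where
  "weight V f = (\<Sum>v\<in>V. f v)"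

definition gamma_tR :: "'a set \<Rightarrow> 'a set set \<Rightarrow> nat" where
  "gamma_tR V E = Min {weight V f | f. tRDF V E f}"

definition total_roman_graph :: "'a set \<Rightarrow> 'a set set \<Rightarrow> bool" where
  "total_roman_graph V E \<longleftrightarrow> gamma_tR V E = 2 * gamma_t V E"

definition direct_prod_edges :: "'a set set \<Rightarrow> 'b set set \<Rightarrow> ('a \<times> 'b) set set" where
  "direct_prod_edges EG EH =
     {{(g, h), (g', h')} | g h g' h'. {g, g'} \<in> EG \<and> g \<noteq> g' \<and> {h, h'} \<in> EH \<and> h \<noteq> h'}"

end

theory Submission
  imports Defs
begin

lemma gamma_t_attained:
  assumes "simple_graph V E" "no_isolated V E"
  shows "\<exists>D. total_dominating_set V E D \<and> card D = gamma_t V E"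
proof -
  have fin: "finite V" using assms(1) by (simp add: simple_graph_def)
  have sub: "{D. total_dominating_set V E D} \<subseteq> Pow V"
    by (auto simp: total_dominating_set_def)
  have "finite {D. total_dominating_set V E D}"
    using fin sub finite_subset by blast
  moreover have "total_dominating_set V E V"
    using assms(2) by (auto simp: total_dominating_set_def no_isolated_def)
  ultimately have "gamma_t V E \<in> card ` {D. total_dominating_set V E D}"
    unfolding gamma_t_def by (intro Min_in) auto
  then show ?thesis by auto
qed

lemma gamma_tR_le:
  assumes "finite V" "tRDF V E f"
  shows "gamma_tR V E \<le> weight V f"
proof -
  have "{weight V f | f. tRDF V E f} \<subseteq> {..2 * card V}"
  proof
    fix w assume "w \<in> {weight V f | f. tRDF V E f}"
    then obtain g where w: "w = weight V g" and g: "tRDF V E g" by auto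
    have "(\<Sum>v\<in>V. g v) \<le> (\<Sum>v\<in>V. 2)"
      using g by (intro sum_mono) (auto simp: tRDF_def)
    then show "w \<in> {..2 * card V}" using w by (simp add: weight_def)
  qed
  then have "finite {weight V f | f. tRDF V E f}" using finite_subset by blast
  then show ?thesis unfolding gamma_tR_def using assms(2) by (intro Min_le) auto
qed

theorem corollary2p6:
  fixes VG :: "'a set" and EG :: "'a set set" and VH :: "'b set" and EH :: "'b set set"
  assumes "simple_graph VG EG" and "simple_graph VH EH"
    and "no_isolated VG EG" and "no_isolated VH EH"
    and "total_roman_graph VG EG" and "total_roman_graph VH EH"
  shows "real (gamma_tR (VG \<times> VH) (direct_prod_edges EG EH))
           \<le> real (gamma_tR VG EG) * real (gamma_tR VH EH) / 2"
proof -
  obtain DG where DG: "total_dominating_set VG EG DG" "card DG = gamma_t VG EG"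
    using gamma_t_attained assms(1,3) by blast
  obtain DH where DH: "total_dominating_set VH EH DH" "card DH = gamma_t VH EH"
    using gamma_t_attained assms(2,4) by blast
  have finG: "finite VG" using assms(1) by (simp add: simple_graph_def)
  have finH: "finite VH" using assms(2) by (simp add: simple_graph_def)
  have DGs: "DG \<subseteq> VG" and DHs: "DH \<subseteq> VH"
    using DG DH by (auto simp: total_dominating_set_def)
  define f where "f = (\<lambda>x. if x \<in> DG \<times> DH then 2 else (0::nat))"
  have nb: "\<exists>u\<in>VG \<times> VH. adj (direct_prod_edges EG EH) x u \<and> f u = 2"
    if xV: "x \<in> VG \<times> VH" for x
  proof -
    obtain g h where x: "x = (g, h)" "g \<in> VG" "h \<in> VH" using xV by (cases x) auto
    obtain g' where g': "g' \<in> DG" "adj EG g g'"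
      using DG(1) x by (auto simp: total_dominating_set_def)
    obtain h' where h': "h' \<in> DH" "adj EH h h'"
      using DH(1) x by (auto simp: total_dominating_set_def)
    have "adj (direct_prod_edges EG EH) x (g', h')"
      using g' h' x unfolding adj_def direct_prod_edges_def by blast
    moreover have "(g', h') \<in> VG \<times> VH" using g' h' DGs DHs by auto
    moreover have "f (g', h') = 2" using g' h' by (simp add: f_def)
    ultimately show ?thesis by blast
  qed
  have t: "tRDF (VG \<times> VH) (direct_prod_edges EG EH) f"
    unfolding tRDF_def
  proof (intro conjI ballI allI impI)
    fix v assume "v \<in> VG \<times> VH"
    from nb[OF this] show "\<exists>u\<in>VG \<times> VH. adj (direct_prod_edges EG EH) v u \<and> 0 < f u" by force
  next
    fix v assume "v \<in> VG \<times> VH"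
    from nb[OF this] show "\<exists>u\<in>VG \<times> VH. adj (direct_prod_edges EG EH) v u \<and> f u = 2" by force
  qed (use DGs DHs in \<open>auto simp: f_def\<close>)
  have "weight (VG \<times> VH) f = 2 * card (DG \<times> DH)"
  proof -
    have "weight (VG \<times> VH) f = (\<Sum>x\<in>(VG \<times> VH) \<inter> (DG \<times> DH). 2)"
      unfolding weight_def f_def using finG finH
      by (simp add: sum.If_cases)
    also have "(VG \<times> VH) \<inter> (DG \<times> DH) = DG \<times> DH" using DGs DHs by auto
    finally show ?thesis by simp
  qed
  also have "\<dots> = 2 * gamma_t VG EG * gamma_t VH EH"
    using DG DH by (simp add: card_cartesian_product)
  finally have "gamma_tR (VG \<times> VH) (direct_prod_edges EG EH) \<le> 2 * gamma_t VG EG * gamma_t VH EH"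
    using gamma_tR_le[OF _ t] finG finH by simp
  then have "real (gamma_tR (VG \<times> VH) (direct_prod_edges EG EH)) \<le> 2 * real (gamma_t VG EG) * real (gamma_t VH EH)"
    by (metis of_nat_le_iff of_nat_mult of_nat_numeral)
  then show ?thesis using assms(5,6) by (simp add: total_roman_graph_def)
qed

end
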